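(* Let $(b,c)$ be a locally finite and connected graph over a countable set $X$ with a cocompact action of a group $G$ such that $H_{b,c}$ is $G$-invariant, and fix $x_0\in X$. Let $\mathcal{K}$ be the closure in $C(X)$ of $\{f\in\mathcal{H}^+:f(x_0)=1\}$ and $\mathcal{M}=\{f\in\mathcal{K}: f\text{ multiplicative}\}$. Then $\mathcal{M}=\mathrm{ex}\,\overline{\mathrm{conv}}\,\mathcal{M}$, the set of extreme points of the closed convex hull of $\mathcal{M}$.
   Context: A graph over $X$ is $(b,c)$ with $b:X\times X\to[0,\infty)$, $c:X\to\mathbb{R}$, $\sum_yb(x,y)<\infty$ ($b$ need not be symmetric); locally finite: each $x$ has finitely many $y$ with $b(x,y)>0$; connected: any two points are joined by a finite sequence $y_1,\dots,y_n$ with $b(y_i,y_{i+1})>0$. $C(X)$ carries the product topology. $H_{b,c}f(x)=\sum_yb(x,y)(f(x)-f(y))+c(x)f(x)$ on $\mathrm{Dom}(H)=\{f:\sum_yb(x,y)|f(y)|<\infty\ \forall x\}$; $\mathcal{H}^+$: nonnegative, nonzero $f$ with $Hf=0$. $T_gf(x)=f(g^{-1}x)$; cocompact: $GV=X$ for some finite $V$; $H$ is $G$-invariant if $T_g$ preserves $\mathrm{Dom}(H)$ and $HT_g=T_gH$. $f$ is multiplicative if $T_gf=\gamma(g^{-1})f$ for all $g\in G$ for some homomorphism $\gamma:G\to(0,\infty)$. *)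

theory Defs
  imports "HOL-Analysis.Analysis" "HOL-Library.Function_Algebras" "HOL-Algebra.Group_Action"
begin

text \<open>Pointwise real vector space structure on real-valued functions, so that the
library notions convex hull and extreme point apply to C(X) = X \<Rightarrow> real
(which carries the product topology via Function_Topology).\<close>

instantiation "fun" :: (type, real_vector) real_vector
begin
definition scaleR_fun :: "real \<Rightarrow> ('a \<Rightarrow> 'b) \<Rightarrow> 'a \<Rightarrow> 'b"
  where "scaleR_fun r f = (\<lambda>x. r *\<^sub>R f x)"
instance
  by standard (auto simp: scaleR_fun_def fun_eq_iff scaleR_add_right scaleR_add_left)
end

definition graph_bc :: "('x \<Rightarrow> 'x \<Rightarrow> real) \<Rightarrow> ('x \<Rightarrow> real) \<Rightarrow> bool" where
  "graph_bc b c \<longleftrightarrow> (\<forall>x y. b x y \<ge> 0) \<and> (\<forall>x. (\<lambda>y. b x y) summable_on UNIV)"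

definition locally_finite_graph :: "('x \<Rightarrow> 'x \<Rightarrow> real) \<Rightarrow> bool" where
  "locally_finite_graph b \<longleftrightarrow> (\<forall>x. finite {y. b x y > 0})"

definition connected_graph :: "('x \<Rightarrow> 'x \<Rightarrow> real) \<Rightarrow> bool" where
  "connected_graph b \<longleftrightarrow> (\<forall>x y. (\<lambda>u v. b u v > 0)\<^sup>*\<^sup>* x y)"

definition DomH :: "('x \<Rightarrow> 'x \<Rightarrow> real) \<Rightarrow> ('x \<Rightarrow> real) set" where
  "DomH b = {f. \<forall>x. (\<lambda>y. b x y * \<bar>f y\<bar>) summable_on UNIV}"

definition Hop :: "('x \<Rightarrow> 'x \<Rightarrow> real) \<Rightarrow> ('x \<Rightarrow> real) \<Rightarrow> ('x \<Rightarrow> real) \<Rightarrow> ('x \<Rightarrow> real)" where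
  "Hop b c f = (\<lambda>x. (\<Sum>\<^sub>\<infinity>y. b x y * (f x - f y)) + c x * f x)"

definition Hplus :: "('x \<Rightarrow> 'x \<Rightarrow> real) \<Rightarrow> ('x \<Rightarrow> real) \<Rightarrow> ('x \<Rightarrow> real) set" where
  "Hplus b c = {f \<in> DomH b. (\<forall>x. f x \<ge> 0) \<and> f \<noteq> 0 \<and> Hop b c f = 0}"

definition Tg :: "('g, 'm) monoid_scheme \<Rightarrow> ('g \<Rightarrow> 'x \<Rightarrow> 'x) \<Rightarrow> 'g \<Rightarrow> ('x \<Rightarrow> real) \<Rightarrow> ('x \<Rightarrow> real)" where
  "Tg G \<phi> g f = (\<lambda>x. f (\<phi> (inv\<^bsub>G\<^esub> g) x))"

definition cocompact :: "('g, 'm) monoid_scheme \<Rightarrow> ('g \<Rightarrow> 'x \<Rightarrow> 'x) \<Rightarrow> bool" where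
  "cocompact G \<phi> \<longleftrightarrow> (\<exists>V. finite V \<and> (\<Union>g\<in>carrier G. \<phi> g ` V) = UNIV)"

definition G_invariant :: "('g, 'm) monoid_scheme \<Rightarrow> ('g \<Rightarrow> 'x \<Rightarrow> 'x) \<Rightarrow>
    ('x \<Rightarrow> 'x \<Rightarrow> real) \<Rightarrow> ('x \<Rightarrow> real) \<Rightarrow> bool" where
  "G_invariant G \<phi> b c \<longleftrightarrow> (\<forall>g\<in>carrier G.
      Tg G \<phi> g ` DomH b \<subseteq> DomH b \<and>
      (\<forall>f\<in>DomH b. Hop b c (Tg G \<phi> g f) = Tg G \<phi> g (Hop b c f)))"

definition pos_hom :: "('g, 'm) monoid_scheme \<Rightarrow> ('g \<Rightarrow> real) \<Rightarrow> bool" where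
  "pos_hom G \<gamma> \<longleftrightarrow> (\<forall>g\<in>carrier G. \<gamma> g > 0) \<and>
     (\<forall>g\<in>carrier G. \<forall>h\<in>carrier G. \<gamma> (g \<otimes>\<^bsub>G\<^esub> h) = \<gamma> g * \<gamma> h)"

definition multiplicative :: "('g, 'm) monoid_scheme \<Rightarrow> ('g \<Rightarrow> 'x \<Rightarrow> 'x) \<Rightarrow> ('x \<Rightarrow> real) \<Rightarrow> bool" where
  "multiplicative G \<phi> f \<longleftrightarrow> (\<exists>\<gamma>. pos_hom G \<gamma> \<and>
     (\<forall>g\<in>carrier G. Tg G \<phi> g f = (\<lambda>x. \<gamma> (inv\<^bsub>G\<^esub> g) * f x)))"

end

theory Submission imports Defs begin



lemma cont_eval [continuous_intros]: "continuous_on S (\<lambda>h::'a \<Rightarrow> 'b::topological_space. h x)"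
  by (rule continuous_on_subset[OF continuous_on_product_coordinates]) simp

lemma fun_scale_add_app [simp]: "(u *\<^sub>R (f::'a\<Rightarrow>real) + v *\<^sub>R g) x = u * f x + v * g x"
  by (simp add: scaleR_fun_def)

lemma fun_scale_app [simp]: "(u *\<^sub>R (f::'a\<Rightarrow>real)) x = u * f x"
  by (simp add: scaleR_fun_def)

definition HS :: "('x \<Rightarrow> 'x \<Rightarrow> real) \<Rightarrow> ('x \<Rightarrow> real) \<Rightarrow> ('x \<Rightarrow> real) \<Rightarrow> 'x \<Rightarrow> real" where
  "HS b c f x = (\<Sum>y\<in>{y. 0 < b x y}. b x y * (f x - f y)) + c x * f x"

definition harm where "harm b c f \<longleftrightarrow> (\<forall>x. HS b c f x = 0)"

definition Kp where "Kp b c x0 = {f. (\<forall>x. 0 \<le> f x) \<and> harm b c f \<and> f x0 = 1}"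

lemma Hop_HS:
  assumes "graph_bc b c" "locally_finite_graph b"
  shows "Hop b c f x = HS b c f x"
proof -
  have fin: "finite {y. 0 < b x y}" using assms(2) by (auto simp: locally_finite_graph_def)
  have "(\<Sum>\<^sub>\<infinity>y. b x y * (f x - f y)) = (\<Sum>\<^sub>\<infinity>y\<in>{y. 0 < b x y}. b x y * (f x - f y))"
  proof (rule infsum_cong_neutral)
    fix y assume "y \<in> UNIV - {y. 0 < b x y}"
    then have "b x y = 0" using assms(1) unfolding graph_bc_def by (metis DiffD2 less_eq_real_def mem_Collect_eq)
    then show "b x y * (f x - f y) = 0" by simp
  qed auto
  also have "\<dots> = (\<Sum>y\<in>{y. 0 < b x y}. b x y * (f x - f y))" using fin by simp
  finally show ?thesis unfolding Hop_def HS_def by simp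
qed

lemma HS_cont: "continuous_on S (\<lambda>f. HS b c f x)"
  unfolding HS_def by (intro continuous_intros)

lemma HS_lin: "HS b c (\<lambda>x. u * f x + v * g x) x = u * HS b c f x + v * HS b c g x"
  unfolding HS_def by (simp add: algebra_simps sum.distrib sum_distrib_left sum_subtractf)

lemma closed_Kp: "closed (Kp b c x0)"
proof -
  have "Kp b c x0 = {f. \<forall>x. 0 \<le> f x} \<inter> {f. \<forall>x. HS b c f x = 0} \<inter> {f. f x0 = 1}"
    unfolding Kp_def harm_def by auto
  moreover have "closed {f::'a\<Rightarrow>real. \<forall>x. 0 \<le> f x}"
  proof (rule closed_Collect_all)
    fix x show "closed {f::'a\<Rightarrow>real. 0 \<le> f x}"
      using closed_Collect_le[OF continuous_on_const cont_eval, of 0 x] by simp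
  qed
  moreover have "closed {f. \<forall>x. HS b c f x = 0}"
    by (intro closed_Collect_all closed_Collect_eq continuous_intros HS_cont)
  moreover have "closed {f::'a\<Rightarrow>real. f x0 = 1}"
    by (intro closed_Collect_eq continuous_intros)
  ultimately show ?thesis by auto
qed

lemma K_eq:
  assumes "graph_bc b c" "locally_finite_graph b"
  shows "closure {f \<in> Hplus b c. f x0 = 1} = Kp b c x0"
proof
  show "closure {f \<in> Hplus b c. f x0 = 1} \<subseteq> Kp b c x0"
  proof (rule closure_minimal[OF _ closed_Kp])
    show "{f \<in> Hplus b c. f x0 = 1} \<subseteq> Kp b c x0"
    proof
      fix f assume f: "f \<in> {f \<in> Hplus b c. f x0 = 1}"
      then have "Hop b c f = 0" "\<forall>x. 0 \<le> f x" "f x0 = 1" by (simp_all add: Hplus_def)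
      then have "\<forall>x. HS b c f x = 0" using Hop_HS[OF assms] by (metis zero_fun_def)
      then show "f \<in> Kp b c x0" using \<open>\<forall>x. 0 \<le> f x\<close> \<open>f x0 = 1\<close> by (simp add: Kp_def harm_def)
    qed
  qed
  show "Kp b c x0 \<subseteq> closure {f \<in> Hplus b c. f x0 = 1}"
  proof
    fix f assume f: "f \<in> Kp b c x0"
    have "f \<in> DomH b" unfolding DomH_def
    proof (intro CollectI allI)
      fix x
      have fin: "finite {y. 0 < b x y}" using assms(2) by (auto simp: locally_finite_graph_def)
      have "(\<lambda>y. b x y * \<bar>f y\<bar>) summable_on {y. 0 < b x y}" using fin by simp
      moreover have "(\<lambda>y. b x y * \<bar>f y\<bar>) summable_on UNIV \<longleftrightarrow> (\<lambda>y. b x y * \<bar>f y\<bar>) summable_on {y. 0 < b x y}"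
      proof (rule summable_on_cong_neutral)
        fix y assume "y \<in> UNIV - {y. 0 < b x y}"
        then have "b x y = 0" using assms(1) unfolding graph_bc_def by (metis DiffD2 less_eq_real_def mem_Collect_eq)
        then show "b x y * \<bar>f y\<bar> = 0" by simp
      qed auto
      ultimately show "(\<lambda>y. b x y * \<bar>f y\<bar>) summable_on UNIV" by simp
    qed
    moreover have "f \<noteq> 0"
    proof
      assume "f = 0" then have "f x0 = 0" by simp
      with f show False by (simp add: Kp_def)
    qed
    moreover have "Hop b c f = 0" using f Hop_HS[OF assms] by (simp add: Kp_def harm_def fun_eq_iff)
    moreover have "\<forall>x. 0 \<le> f x" "f x0 = 1" using f by (simp_all add: Kp_def)
    ultimately have "f \<in> Hplus b c \<and> f x0 = 1" unfolding Hplus_def by simp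
    then have "f \<in> {f \<in> Hplus b c. f x0 = 1}" by simp
    then show "f \<in> closure {f \<in> Hplus b c. f x0 = 1}" by (rule subsetD[OF closure_subset])
  qed
qed

lemma min_step:
  assumes "harm b c f" "\<forall>x. 0 \<le> f x" "f x = 0" "0 < b x y" "locally_finite_graph b"
  shows "f y = 0"
proof -
  have fin: "finite {y. 0 < b x y}" using assms(5) by (auto simp: locally_finite_graph_def)
  have "HS b c f x = 0" using assms(1) by (simp add: harm_def)
  then have "(\<Sum>z\<in>{y. 0 < b x y}. b x z * f z) = 0"
    using assms(3) by (simp add: HS_def sum_negf)
  moreover have "\<forall>z\<in>{y. 0 < b x y}. 0 \<le> b x z * f z" using assms(2) by auto
  ultimately have "\<forall>z\<in>{y. 0 < b x y}. b x z * f z = 0"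
    using sum_nonneg_eq_0_iff[OF fin, of "\<lambda>z. b x z * f z"] by simp
  then have "b x y * f y = 0" using assms(4) by simp
  then show ?thesis using assms(4) by simp
qed

lemma min_principle:
  assumes "harm b c f" "\<forall>x. 0 \<le> f x" "f x = 0" "connected_graph b" "locally_finite_graph b"
  shows "f y = 0"
proof -
  have "(\<lambda>u v. 0 < b u v)\<^sup>*\<^sup>* x y" using assms(4) by (simp add: connected_graph_def)
  then show ?thesis
  proof (induction rule: rtranclp_induct)
    case base then show ?case using assms(3) .
  next
    case (step y z) then show ?case using min_step[OF assms(1,2) step.IH step.hyps(2) assms(5)] by simp
  qed
qed

lemma Kp_pos:
  assumes "f \<in> Kp b c x0" "connected_graph b" "locally_finite_graph b"
  shows "0 < f x"
proof (rule ccontr)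
  assume "\<not> 0 < f x"
  then have "f x = 0" using assms(1) by (auto simp: Kp_def less_eq_real_def)
  then have "f x0 = 0" using min_principle[of b c f x x0] assms by (auto simp: Kp_def)
  then show False using assms(1) by (simp add: Kp_def)
qed

lemma harnack:
  assumes "connected_graph b" "locally_finite_graph b" "graph_bc b c"
  shows "\<exists>B\<ge>0. \<forall>f\<in>Kp b c x0. f v \<le> B"
proof -
  have "(\<lambda>u v. 0 < b u v)\<^sup>*\<^sup>* x0 v" using assms(1) by (simp add: connected_graph_def)
  then show ?thesis
  proof (induction rule: rtranclp_induct)
    case base
    then show ?case by (intro exI[of _ 1]) (auto simp: Kp_def)
  next
    case (step x y)
    from step.IH obtain B where B: "B \<ge> 0" "\<forall>f\<in>Kp b c x0. f x \<le> B" by blast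
    define D where "D = (\<Sum>z\<in>{y. 0 < b x y}. b x z)"
    have fin: "finite {y. 0 < b x y}" using assms(2) by (auto simp: locally_finite_graph_def)
    show ?case
    proof (intro exI[of _ "\<bar>D + c x\<bar> * B / b x y"] conjI ballI)
      show "0 \<le> \<bar>D + c x\<bar> * B / b x y" using B step.hyps(2) by simp
      fix f assume f: "f \<in> Kp b c x0"
      have "HS b c f x = 0" using f by (simp add: Kp_def harm_def)
      then have eq: "(\<Sum>z\<in>{y. 0 < b x y}. b x z * f z) = (D + c x) * f x"
        unfolding HS_def D_def by (simp add: algebra_simps sum_subtractf sum_distrib_left sum_distrib_right)
      have "b x y * f y \<le> (\<Sum>z\<in>{y. 0 < b x y}. b x z * f z)"
        using f step.hyps(2) fin by (intro member_le_sum) (auto simp: Kp_def)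
      also have "\<dots> = (D + c x) * f x" by (rule eq)
      also have "\<dots> \<le> \<bar>D + c x\<bar> * f x"
        using f by (intro mult_right_mono) (auto simp: Kp_def)
      also have "\<dots> \<le> \<bar>D + c x\<bar> * B"
        using f B by (intro mult_left_mono) auto
      finally show "f y \<le> \<bar>D + c x\<bar> * B / b x y" using step.hyps(2) by (simp add: field_simps)
    qed
  qed
qed


lemma uniq:
  assumes conn: "connected_graph b" and lf: "locally_finite_graph b" and cc: "cocompact G \<phi>"
    and f: "f \<in> Kp b c x0" and u: "u \<in> Kp b c x0"
    and fm: "\<forall>g\<in>carrier G. \<forall>x. f (\<phi> g x) = \<gamma> g * f x"
    and um: "\<forall>g\<in>carrier G. \<forall>x. u (\<phi> g x) = \<gamma> g * u x"
    and gp: "\<forall>g\<in>carrier G. 0 \<le> \<gamma> g"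
  shows "u = f"
proof -
  obtain V where V: "finite V" "(\<Union>g\<in>carrier G. \<phi> g ` V) = UNIV"
    using cc by (auto simp: cocompact_def)
  have Vne: "V \<noteq> {}"
  proof
    assume "V = {}" then have "(\<Union>g\<in>carrier G. \<phi> g ` V) = {}" by simp
    with V(2) show False by simp
  qed
  have fpos: "\<And>x. 0 < f x" using Kp_pos[OF f conn lf] .
  define r where "r v = u v / f v" for v
  define R where "R = Max (r ` V)"
  have "R \<in> r ` V" unfolding R_def using V(1) Vne by simp
  then obtain v1 where v1: "v1 \<in> V" "r v1 = R" by auto
  have Rge: "u v \<le> R * f v" if "v \<in> V" for v
  proof -
    have "r v \<le> R" unfolding R_def using V(1) that by simp
    then have "u v / f v \<le> R" by (simp add: r_def)
    then show ?thesis using fpos[of v] by (simp add: divide_le_eq)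
  qed
  define w where "w = (\<lambda>x. R * f x + (-1) * u x)"
  have wnn: "\<forall>x. 0 \<le> w x"
  proof
    fix x
    have "x \<in> (\<Union>g\<in>carrier G. \<phi> g ` V)" using V(2) by simp
    then obtain g v where g: "g \<in> carrier G" "v \<in> V" "x = \<phi> g v" by auto
    have "w x = \<gamma> g * (R * f v - u v)" using g fm um by (simp add: w_def algebra_simps)
    moreover have "0 \<le> R * f v - u v" using Rge[OF g(2)] by simp
    ultimately show "0 \<le> w x" using gp g(1) by simp
  qed
  have "HS b c w x = R * HS b c f x + (-1) * HS b c u x" for x
    unfolding w_def by (rule HS_lin)
  then have hw: "harm b c w"
    using f u unfolding harm_def Kp_def by simp
  have "u v1 = R * f v1" using v1(2) fpos[of v1] by (simp add: r_def field_simps)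
  then have "w v1 = 0" by (simp add: w_def)
  then have w0: "\<And>y. w y = 0" using min_principle[OF hw wnn _ conn lf] by blast
  have "R = 1" using w0[of x0] f u by (simp add: w_def Kp_def)
  then show "u = f" using w0 by (simp add: w_def fun_eq_iff)
qed

lemma comb:
  assumes "convex S" "a1 \<in> S" "a2 \<in> S" "0 \<le> p" "0 \<le> q"
  shows "\<exists>a\<in>S. p *\<^sub>R a1 + q *\<^sub>R a2 = (p + q) *\<^sub>R a"
proof (cases "p + q = 0")
  case True
  then have "p = 0" "q = 0" using assms by auto
  then show ?thesis using assms(2) by auto
next
  case False
  then have pq: "0 < p + q" using assms by auto
  define a where "a = (p / (p + q)) *\<^sub>R a1 + (q / (p + q)) *\<^sub>R a2"
  have "a \<in> S" unfolding a_def
    using assms pq by (intro convexD[OF assms(1)]) (auto simp: add_divide_distrib[symmetric])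
  moreover have "(p + q) *\<^sub>R a = p *\<^sub>R a1 + q *\<^sub>R a2"
    unfolding a_def using pq by (simp add: scaleR_add_right)
  ultimately show ?thesis by metis
qed

lemma ext_sub:
  assumes "f extreme_point_of S" "f \<in> T" "T \<subseteq> S"
  shows "f extreme_point_of T"
  using assms unfolding extreme_point_of_def by blast

lemma memE:
  fixes a b :: "'a::real_vector"
  assumes "0 \<le> u" "0 \<le> v" "u + v = 1" "a \<in> SA" "b \<in> SB"
  shows "u *\<^sub>R a + v *\<^sub>R b \<in> {u *\<^sub>R a + v *\<^sub>R b | u v a b. 0 \<le> u \<and> 0 \<le> v \<and> u + v = 1 \<and> a \<in> SA \<and> b \<in> SB}"
  using assms by blast

lemma two_pieces:
  fixes A B Q :: "('x::countable \<Rightarrow> real) set"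
  assumes Q: "compact Q" "convex Q" and AQ: "A \<subseteq> Q" and BQ: "B \<subseteq> Q"
    and ext: "f extreme_point_of closure (convex hull (A \<union> B))"
  shows "f extreme_point_of closure (convex hull A) \<or> f extreme_point_of closure (convex hull B)"
proof (cases "A = {} \<or> B = {}")
  case True
  then show ?thesis using ext by auto
next
  case False
  then have Ane: "A \<noteq> {}" and Bne: "B \<noteq> {}" by auto
  define C where "C = closure (convex hull (A \<union> B))"
  define CA where "CA = closure (convex hull A)"
  define CB where "CB = closure (convex hull B)"
  have cQ: "closed Q" using Q(1) by (rule compact_imp_closed)
  have CAQ: "CA \<subseteq> Q" unfolding CA_def
    by (intro closure_minimal[OF _ cQ] hull_minimal[where S=convex, OF AQ Q(2)])
  have CBQ: "CB \<subseteq> Q" unfolding CB_def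
    by (intro closure_minimal[OF _ cQ] hull_minimal[where S=convex, OF BQ Q(2)])
  have cCA: "compact CA"
  proof -
    have "compact (Q \<inter> CA)" using Q(1) by (intro compact_Int_closed) (auto simp: CA_def)
    moreover have "Q \<inter> CA = CA" using CAQ by blast
    ultimately show ?thesis by simp
  qed
  have cCB: "compact CB"
  proof -
    have "compact (Q \<inter> CB)" using Q(1) by (intro compact_Int_closed) (auto simp: CB_def)
    moreover have "Q \<inter> CB = CB" using CBQ by blast
    ultimately show ?thesis by simp
  qed
  define F where "F = (\<lambda>p::real \<times> (('x \<Rightarrow> real) \<times> ('x \<Rightarrow> real)). (1 - fst p) *\<^sub>R fst (snd p) + fst p *\<^sub>R snd (snd p))"
  define D where "D = F ` ({0..1} \<times> (CA \<times> CB))"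
  have contF: "continuous_on UNIV F"
  proof (rule continuous_on_coordinatewise_then_product)
    fix i
    have c1: "continuous_on UNIV (\<lambda>p::real \<times> (('x \<Rightarrow> real) \<times> ('x \<Rightarrow> real)). fst (snd p) i)"
      by (rule continuous_on_product_then_coordinatewise) (intro continuous_intros)
    have c2: "continuous_on UNIV (\<lambda>p::real \<times> (('x \<Rightarrow> real) \<times> ('x \<Rightarrow> real)). snd (snd p) i)"
      by (rule continuous_on_product_then_coordinatewise) (intro continuous_intros)
    have "continuous_on UNIV (\<lambda>p::real \<times> (('x \<Rightarrow> real) \<times> ('x \<Rightarrow> real)). (1 - fst p) * fst (snd p) i + fst p * snd (snd p) i)"
      by (intro continuous_intros c1 c2)
    then show "continuous_on UNIV (\<lambda>p. F p i)" by (simp add: F_def)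
  qed
  have cD: "compact D" unfolding D_def
    by (intro compact_continuous_image continuous_on_subset[OF contF] compact_Times cCA cCB) auto
  define E where "E = {u *\<^sub>R a + v *\<^sub>R b | u v a b. 0 \<le> u \<and> 0 \<le> v \<and> u + v = 1 \<and> a \<in> convex hull A \<and> b \<in> convex hull B}"
  have convE: "convex E" unfolding convex_def
  proof (intro ballI allI impI)
    fix x y :: "'x \<Rightarrow> real" and s r :: real
    assume x: "x \<in> E" and y: "y \<in> E" and sr: "0 \<le> s" "0 \<le> r" "s + r = 1"
    obtain u1 v1 a1 b1 where 1: "x = u1 *\<^sub>R a1 + v1 *\<^sub>R b1" "0 \<le> u1" "0 \<le> v1" "u1 + v1 = 1" "a1 \<in> convex hull A" "b1 \<in> convex hull B"
      using x unfolding E_def by blast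
    obtain u2 v2 a2 b2 where 2: "y = u2 *\<^sub>R a2 + v2 *\<^sub>R b2" "0 \<le> u2" "0 \<le> v2" "u2 + v2 = 1" "a2 \<in> convex hull A" "b2 \<in> convex hull B"
      using y unfolding E_def by blast
    obtain a where a: "a \<in> convex hull A" "(s * u1) *\<^sub>R a1 + (r * u2) *\<^sub>R a2 = (s * u1 + r * u2) *\<^sub>R a"
      using comb[OF convex_convex_hull 1(5) 2(5), of "s * u1" "r * u2"] sr 1 2 by auto
    obtain b where b: "b \<in> convex hull B" "(s * v1) *\<^sub>R b1 + (r * v2) *\<^sub>R b2 = (s * v1 + r * v2) *\<^sub>R b"
      using comb[OF convex_convex_hull 1(6) 2(6), of "s * v1" "r * v2"] sr 1 2 by auto
    have "s *\<^sub>R x + r *\<^sub>R y = ((s * u1) *\<^sub>R a1 + (r * u2) *\<^sub>R a2) + ((s * v1) *\<^sub>R b1 + (r * v2) *\<^sub>R b2)"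
      unfolding 1(1) 2(1) by (rule HOL.ext) (simp add: algebra_simps)
    also have "\<dots> = (s * u1 + r * u2) *\<^sub>R a + (s * v1 + r * v2) *\<^sub>R b" using a b by simp
    finally have eq: "s *\<^sub>R x + r *\<^sub>R y = (s * u1 + r * u2) *\<^sub>R a + (s * v1 + r * v2) *\<^sub>R b" .
    have "s * u1 + r * u2 + (s * v1 + r * v2) = s * (u1 + v1) + r * (u2 + v2)" by (simp add: algebra_simps)
    then have w1: "s * u1 + r * u2 + (s * v1 + r * v2) = 1" using 1(4) 2(4) sr(3) by simp
    have "0 \<le> s * u1 + r * u2" "0 \<le> s * v1 + r * v2" using sr 1 2 by simp_all
    then show "s *\<^sub>R x + r *\<^sub>R y \<in> E" unfolding eq E_def using w1 a(1) b(1) by (intro memE) auto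
  qed
  obtain b0 where b0: "b0 \<in> B" using Bne by blast
  obtain a0 where a0: "a0 \<in> A" using Ane by blast
  have "A \<union> B \<subseteq> E"
  proof
    fix z assume "z \<in> A \<union> B"
    then show "z \<in> E"
    proof
      assume z: "z \<in> A"
      have "z \<in> convex hull A" using subsetD[OF hull_subset z] .
      moreover have "b0 \<in> convex hull B" using subsetD[OF hull_subset b0] .
      ultimately have "1 *\<^sub>R z + 0 *\<^sub>R b0 \<in> E" unfolding E_def by (intro memE) auto
      then show "z \<in> E" by simp
    next
      assume z: "z \<in> B"
      have "z \<in> convex hull B" using subsetD[OF hull_subset z] .
      moreover have "a0 \<in> convex hull A" using subsetD[OF hull_subset a0] .
      ultimately have "0 *\<^sub>R a0 + 1 *\<^sub>R z \<in> E" unfolding E_def by (intro memE) auto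
      then show "z \<in> E" by simp
    qed
  qed
  then have hE: "convex hull (A \<union> B) \<subseteq> E" by (rule hull_minimal) (rule convE)
  have ED: "E \<subseteq> D"
  proof
    fix z assume "z \<in> E"
    then obtain u v a b where z: "z = u *\<^sub>R a + v *\<^sub>R b" "0 \<le> u" "0 \<le> v" "u + v = 1" "a \<in> convex hull A" "b \<in> convex hull B"
      unfolding E_def by blast
    have "a \<in> CA" "b \<in> CB" using z(5,6) closure_subset unfolding CA_def CB_def by blast+
    moreover have "z = F (v, (a, b))" using z(1,4) by (simp add: F_def)
    moreover have "v \<in> {0..1}" using z(2,3,4) by simp
    ultimately show "z \<in> D" unfolding D_def by blast
  qed
  have CD: "C \<subseteq> D" unfolding C_def
    using hE ED by (intro closure_minimal compact_imp_closed cD) blast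
  have fC: "f \<in> C" using ext unfolding C_def extreme_point_of_def by blast
  then obtain t a b where tab: "t \<in> {0..1}" "a \<in> CA" "b \<in> CB" "f = F (t, (a, b))"
    using CD unfolding D_def by blast
  have CAC: "CA \<subseteq> C" unfolding CA_def C_def by (intro closure_mono hull_mono) blast
  have CBC: "CB \<subseteq> C" unfolding CB_def C_def by (intro closure_mono hull_mono) blast
  have "f \<in> CA \<or> f \<in> CB"
  proof (rule ccontr)
    assume nn: "\<not> (f \<in> CA \<or> f \<in> CB)"
    then have fa: "f \<noteq> a" and fb: "f \<noteq> b" using tab by auto
    have feq: "f = (1 - t) *\<^sub>R a + t *\<^sub>R b" using tab(4) by (simp add: F_def)
    have ab: "a \<noteq> b"
    proof
      assume "a = b" then have "f = a" using feq by (simp add: scaleR_left_distrib[symmetric])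
      with fa show False by simp
    qed
    have "t \<noteq> 0" using feq fa by auto
    moreover have "t \<noteq> 1" using feq fb by auto
    ultimately have "0 < t" "t < 1" using tab(1) by auto
    then have "f \<in> open_segment a b" using ab feq by (auto simp: in_segment)
    moreover have "a \<in> C" "b \<in> C" using tab CAC CBC by blast+
    ultimately show False using ext unfolding C_def extreme_point_of_def by blast
  qed
  then show ?thesis
  proof
    assume "f \<in> CA" then show ?thesis using ext_sub[OF ext _ CAC[unfolded CA_def C_def]] by (simp add: CA_def)
  next
    assume "f \<in> CB" then show ?thesis using ext_sub[OF ext _ CBC[unfolded CB_def C_def]] by (simp add: CB_def)
  qed
qed


lemma conv_quad:
  fixes s r L1 L2 Q1 Q2 :: real
  assumes "0 \<le> s" "0 \<le> r" "s + r = 1" "L1\<^sup>2 \<le> Q1" "L2\<^sup>2 \<le> Q2"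
  shows "(s * L1 + r * L2)\<^sup>2 \<le> s * Q1 + r * Q2"
proof -
  have r: "r = 1 - s" using assms(3) by simp
  have "s * L1\<^sup>2 + r * L2\<^sup>2 - (s * L1 + r * L2)\<^sup>2 = s * r * (L1 - L2)\<^sup>2"
    unfolding r by (simp add: algebra_simps power2_eq_square)
  moreover have "0 \<le> s * r * (L1 - L2)\<^sup>2" using assms by simp
  ultimately have "(s * L1 + r * L2)\<^sup>2 \<le> s * L1\<^sup>2 + r * L2\<^sup>2" by linarith
  also have "\<dots> \<le> s * Q1 + r * Q2"
    using assms by (intro add_mono mult_left_mono) auto
  finally show ?thesis .
qed

lemma jensen_eq:
  fixes t q1 q2 a1 a2 :: real
  assumes "0 < t" "t < 1" "0 \<le> q1 - a1\<^sup>2" "0 \<le> q2 - a2\<^sup>2"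
    and "(1 - t) * q1 + t * q2 = ((1 - t) * a1 + t * a2)\<^sup>2"
  shows "a1 = a2 \<and> q1 = a1\<^sup>2 \<and> q2 = a2\<^sup>2"
proof -
  have id: "(1 - t) * q1 + t * q2 - ((1 - t) * a1 + t * a2)\<^sup>2 =
      (1 - t) * (q1 - a1\<^sup>2) + t * (q2 - a2\<^sup>2) + t * (1 - t) * (a1 - a2)\<^sup>2"
    by (simp add: algebra_simps power2_eq_square)
  define X where "X = (1 - t) * (q1 - a1\<^sup>2)"
  define Y where "Y = t * (q2 - a2\<^sup>2)"
  define Z where "Z = t * (1 - t) * (a1 - a2)\<^sup>2"
  have "0 \<le> X" "0 \<le> Y" "0 \<le> Z" using assms by (simp_all add: X_def Y_def Z_def)
  moreover have "X + Y + Z = 0" using id assms(5) by (simp add: X_def Y_def Z_def)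
  ultimately have "X = 0" "Y = 0" "Z = 0" by linarith+
  then show ?thesis using assms(1,2) by (simp add: X_def Y_def Z_def)
qed

lemma box_compact:
  fixes Bf :: "'x::countable \<Rightarrow> real"
  shows "compact {h. \<forall>x. 0 \<le> h x \<and> h x \<le> Bf x}"
proof -
  have "compactin (product_topology (\<lambda>i. euclidean) UNIV) (Pi\<^sub>E UNIV (\<lambda>x. {0..Bf x}))"
    by (subst compactin_PiE) simp
  then have "compact (Pi\<^sub>E UNIV (\<lambda>x. {0..Bf x}))"
    by (simp add: euclidean_product_topology)
  moreover have "Pi\<^sub>E UNIV (\<lambda>x. {0..Bf x}) = {h. \<forall>x. 0 \<le> h x \<and> h x \<le> Bf x}"
    by (auto simp: PiE_UNIV_domain Pi_def)
  ultimately show ?thesis by simp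
qed

lemma mult_fwd:
  assumes "group G" "multiplicative G \<phi> m" "m x0 = 1" "g \<in> carrier G"
  shows "m (\<phi> g x) = m (\<phi> g x0) * m x"
proof -
  obtain \<gamma> where \<gamma>: "\<forall>g\<in>carrier G. Tg G \<phi> g m = (\<lambda>x. \<gamma> (inv\<^bsub>G\<^esub> g) * m x)"
    using assms(2) unfolding multiplicative_def by blast
  have ig: "inv\<^bsub>G\<^esub> g \<in> carrier G" using assms(1,4) by (simp add: group.inv_closed)
  have ii: "inv\<^bsub>G\<^esub> (inv\<^bsub>G\<^esub> g) = g" using assms(1,4) by (simp add: group.inv_inv)
  have "Tg G \<phi> (inv\<^bsub>G\<^esub> g) m = (\<lambda>x. \<gamma> g * m x)" using \<gamma> ig ii by simp
  then have e: "\<And>y. m (\<phi> g y) = \<gamma> g * m y" unfolding Tg_def ii by (simp add: fun_eq_iff)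
  show ?thesis using e[of x] e[of x0] assms(3) by simp
qed

lemma mult_bwd:
  assumes "group G" "group_action G UNIV \<phi>" "\<And>x. 0 < m x"
    and e: "\<forall>g\<in>carrier G. \<forall>x. m (\<phi> g x) = m (\<phi> g x0) * m x"
  shows "multiplicative G \<phi> m"
  unfolding multiplicative_def
proof (intro exI conjI)
  define \<gamma> where "\<gamma> g = m (\<phi> g x0)" for g
  show "pos_hom G \<gamma>" unfolding pos_hom_def
  proof (intro conjI ballI)
    fix g assume "g \<in> carrier G" then show "0 < \<gamma> g" using assms(3) by (simp add: \<gamma>_def)
  next
    fix g h assume g: "g \<in> carrier G" and h: "h \<in> carrier G"
    have "\<phi> (g \<otimes>\<^bsub>G\<^esub> h) x0 = \<phi> g (\<phi> h x0)"
      using group_action.composition_rule[OF assms(2) _ g h] by simp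
    moreover have "m (\<phi> g (\<phi> h x0)) = m (\<phi> g x0) * m (\<phi> h x0)" using e g by blast
    ultimately show "\<gamma> (g \<otimes>\<^bsub>G\<^esub> h) = \<gamma> g * \<gamma> h" by (simp add: \<gamma>_def)
  qed
  show "\<forall>g\<in>carrier G. Tg G \<phi> g m = (\<lambda>x. \<gamma> (inv\<^bsub>G\<^esub> g) * m x)"
  proof
    fix g assume g: "g \<in> carrier G"
    have ig: "inv\<^bsub>G\<^esub> g \<in> carrier G" using assms(1) g by (simp add: group.inv_closed)
    have "\<forall>x. m (\<phi> (inv\<^bsub>G\<^esub> g) x) = m (\<phi> (inv\<^bsub>G\<^esub> g) x0) * m x" using e ig by blast
    then show "Tg G \<phi> g m = (\<lambda>x. \<gamma> (inv\<^bsub>G\<^esub> g) * m x)"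
      unfolding Tg_def \<gamma>_def by (intro HOL.ext) blast
  qed
qed

definition Wset where
  "Wset b c G \<phi> x0 Bf =
    {h. \<forall>x. 0 \<le> h x \<and> h x \<le> Bf x} \<inter> {h. \<forall>x. HS b c h x = 0} \<inter> {h. h x0 = 1} \<inter>
    {h. \<forall>g. g \<in> carrier G \<longrightarrow> (\<forall>v l. (h (\<phi> g v) - l * h v)\<^sup>2 \<le> (Bf v)\<^sup>2 * (h (\<phi> g (\<phi> g x0)) - 2 * l * h (\<phi> g x0) + l\<^sup>2))} \<inter>
    {h. \<forall>g. g \<in> carrier G \<longrightarrow> (\<forall>l. 0 \<le> h (\<phi> g (\<phi> g x0)) - 2 * l * h (\<phi> g x0) + l\<^sup>2)}"

lemma closed_const_imp: "closed {x. P x} \<Longrightarrow> closed {x. A \<longrightarrow> P x}"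
  by (cases A) auto

lemma closed_Wset: "closed (Wset b c G \<phi> x0 (Bf::'x::countable \<Rightarrow> real))"
proof -
  have 1: "closed {h::'x\<Rightarrow>real. \<forall>x. 0 \<le> h x \<and> h x \<le> Bf x}"
  proof (intro closed_Collect_all closed_Collect_conj)
    fix x
    show "closed {h::'x\<Rightarrow>real. 0 \<le> h x}"
      using closed_Collect_le[OF continuous_on_const cont_eval, of 0 x] by simp
    show "closed {h::'x\<Rightarrow>real. h x \<le> Bf x}"
      using closed_Collect_le[OF cont_eval continuous_on_const, of x "Bf x"] by simp
  qed
  have 2: "closed {h::'x\<Rightarrow>real. \<forall>x. HS b c h x = 0}"
    by (intro closed_Collect_all closed_Collect_eq continuous_intros HS_cont)
  have 3: "closed {h::'x\<Rightarrow>real. h x0 = 1}"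
    using closed_Collect_eq[OF cont_eval continuous_on_const, of x0 1] by simp
  have 4: "closed {h::'x\<Rightarrow>real. \<forall>g. g \<in> carrier G \<longrightarrow> (\<forall>v l. (h (\<phi> g v) - l * h v)\<^sup>2 \<le> (Bf v)\<^sup>2 * (h (\<phi> g (\<phi> g x0)) - 2 * l * h (\<phi> g x0) + l\<^sup>2))}"
  proof (intro closed_Collect_all closed_const_imp)
    fix g v l
    show "closed {h::'x\<Rightarrow>real. (h (\<phi> g v) - l * h v)\<^sup>2 \<le> (Bf v)\<^sup>2 * (h (\<phi> g (\<phi> g x0)) - 2 * l * h (\<phi> g x0) + l\<^sup>2)}"
      by (rule closed_Collect_le) (intro continuous_intros)+
  qed
  have 5: "closed {h::'x\<Rightarrow>real. \<forall>g. g \<in> carrier G \<longrightarrow> (\<forall>l. 0 \<le> h (\<phi> g (\<phi> g x0)) - 2 * l * h (\<phi> g x0) + l\<^sup>2)}"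
  proof (intro closed_Collect_all closed_const_imp)
    fix g l
    show "closed {h::'x\<Rightarrow>real. 0 \<le> h (\<phi> g (\<phi> g x0)) - 2 * l * h (\<phi> g x0) + l\<^sup>2}"
      by (rule closed_Collect_le) (intro continuous_intros)+
  qed
  show ?thesis unfolding Wset_def using 1 2 3 4 5 by (intro closed_Int)
qed

lemma convex_Wset: "convex (Wset b c G \<phi> x0 (Bf::'x::countable \<Rightarrow> real))"
  unfolding convex_def
proof (intro ballI allI impI)
  fix h1 h2 :: "'x \<Rightarrow> real" and s r :: real
  assume h1: "h1 \<in> Wset b c G \<phi> x0 Bf" and h2: "h2 \<in> Wset b c G \<phi> x0 Bf"
    and sr: "0 \<le> s" "0 \<le> r" "s + r = 1"
  have r: "r = 1 - s" using sr(3) by simp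
  define h where "h = s *\<^sub>R h1 + r *\<^sub>R h2"
  have hx: "\<And>x. h x = s * h1 x + r * h2 x" by (simp add: h_def)
  have A: "\<forall>x. 0 \<le> h x \<and> h x \<le> Bf x"
  proof
    fix x
    have "0 \<le> h1 x" "h1 x \<le> Bf x" "0 \<le> h2 x" "h2 x \<le> Bf x" using h1 h2 by (simp_all add: Wset_def)
    then have "s * h1 x + r * h2 x \<le> s * Bf x + r * Bf x" using sr by (intro add_mono mult_left_mono) auto
    moreover have "s * Bf x + r * Bf x = Bf x" using sr(3) by (simp add: algebra_simps flip: distrib_right)
    moreover have "0 \<le> s * h1 x + r * h2 x" using sr \<open>0 \<le> h1 x\<close> \<open>0 \<le> h2 x\<close> by simp
    ultimately show "0 \<le> h x \<and> h x \<le> Bf x" by (simp add: hx)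
  qed
  have B: "\<forall>x. HS b c h x = 0"
  proof
    fix x
    have "HS b c h x = HS b c (\<lambda>x. s * h1 x + r * h2 x) x" by (simp add: hx[abs_def])
    also have "\<dots> = s * HS b c h1 x + r * HS b c h2 x" by (rule HS_lin)
    finally show "HS b c h x = 0" using h1 h2 by (simp add: Wset_def)
  qed
  have C: "h x0 = 1" using h1 h2 sr(3) by (simp add: Wset_def hx)
  have D: "\<forall>g. g \<in> carrier G \<longrightarrow> (\<forall>v l. (h (\<phi> g v) - l * h v)\<^sup>2 \<le> (Bf v)\<^sup>2 * (h (\<phi> g (\<phi> g x0)) - 2 * l * h (\<phi> g x0) + l\<^sup>2))"
  proof (intro allI impI)
    fix g v l assume g: "g \<in> carrier G"
    define L1 where "L1 = h1 (\<phi> g v) - l * h1 v"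
    define L2 where "L2 = h2 (\<phi> g v) - l * h2 v"
    define Q1 where "Q1 = (Bf v)\<^sup>2 * (h1 (\<phi> g (\<phi> g x0)) - 2 * l * h1 (\<phi> g x0) + l\<^sup>2)"
    define Q2 where "Q2 = (Bf v)\<^sup>2 * (h2 (\<phi> g (\<phi> g x0)) - 2 * l * h2 (\<phi> g x0) + l\<^sup>2)"
    have "L1\<^sup>2 \<le> Q1" using h1 g unfolding L1_def Q1_def Wset_def by blast
    moreover have "L2\<^sup>2 \<le> Q2" using h2 g unfolding L2_def Q2_def Wset_def by blast
    ultimately have "(s * L1 + r * L2)\<^sup>2 \<le> s * Q1 + r * Q2" using conv_quad sr by blast
    moreover have "h (\<phi> g v) - l * h v = s * L1 + r * L2"
      unfolding L1_def L2_def hx by (simp add: algebra_simps)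
    moreover have "(Bf v)\<^sup>2 * (h (\<phi> g (\<phi> g x0)) - 2 * l * h (\<phi> g x0) + l\<^sup>2) = s * Q1 + r * Q2"
      unfolding Q1_def Q2_def hx r by (simp add: algebra_simps)
    ultimately show "(h (\<phi> g v) - l * h v)\<^sup>2 \<le> (Bf v)\<^sup>2 * (h (\<phi> g (\<phi> g x0)) - 2 * l * h (\<phi> g x0) + l\<^sup>2)"
      by simp
  qed
  have E: "\<forall>g. g \<in> carrier G \<longrightarrow> (\<forall>l. 0 \<le> h (\<phi> g (\<phi> g x0)) - 2 * l * h (\<phi> g x0) + l\<^sup>2)"
  proof (intro allI impI)
    fix g l assume g: "g \<in> carrier G"
    define Q1 where "Q1 = h1 (\<phi> g (\<phi> g x0)) - 2 * l * h1 (\<phi> g x0) + l\<^sup>2"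
    define Q2 where "Q2 = h2 (\<phi> g (\<phi> g x0)) - 2 * l * h2 (\<phi> g x0) + l\<^sup>2"
    have "0 \<le> Q1" using h1 g unfolding Q1_def Wset_def by blast
    moreover have "0 \<le> Q2" using h2 g unfolding Q2_def Wset_def by blast
    ultimately have "0 \<le> s * Q1 + r * Q2" using sr by simp
    moreover have "h (\<phi> g (\<phi> g x0)) - 2 * l * h (\<phi> g x0) + l\<^sup>2 = s * Q1 + r * Q2"
      unfolding Q1_def Q2_def hx r by (simp add: algebra_simps)
    ultimately show "0 \<le> h (\<phi> g (\<phi> g x0)) - 2 * l * h (\<phi> g x0) + l\<^sup>2" by simp
  qed
  show "s *\<^sub>R h1 + r *\<^sub>R h2 \<in> Wset b c G \<phi> x0 Bf"
    using A B C D E unfolding h_def[symmetric] Wset_def by blast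
qed

lemma Wset_Kp: "h \<in> Wset b c G \<phi> x0 Bf \<Longrightarrow> h \<in> Kp b c x0"
  unfolding Wset_def Kp_def harm_def by blast


lemma small_pow:
  fixes d L :: real
  assumes "0 < d" "\<forall>n. d \<le> (L / 2 ^ n)\<^sup>2"
  shows False
proof -
  have p: "0 < L\<^sup>2 + 1" using zero_le_power2[of L] by linarith
  have "0 < d / (L\<^sup>2 + 1)" using assms(1) p by (rule divide_pos_pos)
  then obtain n where n: "(1/4::real) ^ n < d / (L\<^sup>2 + 1)" using real_arch_pow_inv[of "d / (L\<^sup>2 + 1)" "1/4"] by auto
  have e: "(L / 2 ^ n)\<^sup>2 = L\<^sup>2 * (1/4) ^ n"
  proof -
    have h4: "(2::real)^n * 2^n = 4^n" by (simp flip: power_mult_distrib)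
    have "(L / 2^n)\<^sup>2 = L\<^sup>2 / (2^n * 2^n)" by (simp add: power2_eq_square)
    also have "\<dots> = L\<^sup>2 / 4^n" using h4 by simp
    also have "\<dots> = L\<^sup>2 * (1/4) ^ n" by (simp add: power_one_over)
    finally show ?thesis .
  qed
  have "L\<^sup>2 * (1/4::real) ^ n \<le> (L\<^sup>2 + 1) * (1/4) ^ n" by (intro mult_right_mono) auto
  also have "\<dots> < d" using n p by (simp add: field_simps)
  finally show False using assms(2) e by (metis not_le)
qed

lemma bisect:
  fixes M Q :: "('x::countable \<Rightarrow> real) set" and p1 p2 :: 'x
  assumes Q: "compact Q" "convex Q" "M \<subseteq> Q"
    and Mprop: "\<forall>m\<in>M. m p2 = (m p1)\<^sup>2 \<and> 0 \<le> m p1 \<and> m p1 \<le> L"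
    and ext: "f extreme_point_of closure (convex hull M)"
  shows "f p2 \<le> (f p1)\<^sup>2"
proof -
  define MI where "MI lo hi = {m\<in>M. lo \<le> m p1 \<and> m p1 \<le> hi}" for lo hi
  have bound: "f' p2 - (f' p1)\<^sup>2 \<le> (hi - lo)\<^sup>2"
    if f': "f' \<in> closure (convex hull (MI lo hi))" for f' lo hi
  proof -
    define S where "S = {h::'x\<Rightarrow>real. h p2 \<le> (lo + hi) * h p1 - lo * hi \<and> lo \<le> h p1 \<and> h p1 \<le> hi}"
    have cS: "closed S" unfolding S_def
    proof (intro closed_Collect_conj)
      show "closed {h::'x\<Rightarrow>real. h p2 \<le> (lo + hi) * h p1 - lo * hi}"
        by (rule closed_Collect_le) (intro continuous_intros)+
      show "closed {h::'x\<Rightarrow>real. lo \<le> h p1}"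
        by (rule closed_Collect_le) (intro continuous_intros)+
      show "closed {h::'x\<Rightarrow>real. h p1 \<le> hi}"
        by (rule closed_Collect_le) (intro continuous_intros)+
    qed
    have vS: "convex S" unfolding convex_def
    proof (intro ballI allI impI)
      fix h1 h2 :: "'x \<Rightarrow> real" and s r :: real
      assume h1: "h1 \<in> S" and h2: "h2 \<in> S" and sr: "0 \<le> s" "0 \<le> r" "s + r = 1"
      have r: "r = 1 - s" using sr(3) by simp
      have a: "h1 p2 \<le> (lo + hi) * h1 p1 - lo * hi" "lo \<le> h1 p1" "h1 p1 \<le> hi" using h1 by (simp_all add: S_def)
      have b: "h2 p2 \<le> (lo + hi) * h2 p1 - lo * hi" "lo \<le> h2 p1" "h2 p1 \<le> hi" using h2 by (simp_all add: S_def)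
      have 1: "s * h1 p2 + r * h2 p2 \<le> s * ((lo + hi) * h1 p1 - lo * hi) + r * ((lo + hi) * h2 p1 - lo * hi)"
        using a b sr by (intro add_mono mult_left_mono) auto
      have 2: "s * lo + r * lo \<le> s * h1 p1 + r * h2 p1"
        using a b sr by (intro add_mono mult_left_mono) auto
      have 3: "s * h1 p1 + r * h2 p1 \<le> s * hi + r * hi"
        using a b sr by (intro add_mono mult_left_mono) auto
      show "s *\<^sub>R h1 + r *\<^sub>R h2 \<in> S" unfolding S_def using 1 2 3 unfolding r
        by (simp add: algebra_simps)
    qed
    have "MI lo hi \<subseteq> S"
    proof
      fix m assume "m \<in> MI lo hi"
      then have m: "m \<in> M" "lo \<le> m p1" "m p1 \<le> hi" by (simp_all add: MI_def)
      have q: "m p2 = (m p1)\<^sup>2" using Mprop m(1) by blast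
      have "(m p1 - lo) * (m p1 - hi) \<le> 0" using m(2,3) by (intro mult_nonneg_nonpos) auto
      then have "m p2 \<le> (lo + hi) * m p1 - lo * hi" unfolding q by (simp add: algebra_simps power2_eq_square)
      then show "m \<in> S" using m unfolding S_def by simp
    qed
    then have "closure (convex hull (MI lo hi)) \<subseteq> S"
      by (intro closure_minimal cS hull_minimal[where S=convex] vS)
    then have fS: "f' \<in> S" using f' by blast
    then have fa: "f' p2 \<le> (lo + hi) * f' p1 - lo * hi" "lo \<le> f' p1" "f' p1 \<le> hi" by (simp_all add: S_def)
    have "f' p2 - (f' p1)\<^sup>2 \<le> (f' p1 - lo) * (hi - f' p1)"
      using fa(1) by (simp add: algebra_simps power2_eq_square)
    also have "\<dots> \<le> (hi - lo) * (hi - lo)"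
      using fa by (intro mult_mono) auto
    finally show ?thesis by (simp add: power2_eq_square)
  qed
  have ind: "\<exists>lo. f extreme_point_of closure (convex hull (MI lo (lo + L / 2 ^ n)))" for n
  proof (induction n)
    case 0
    have "MI 0 (0 + L / 2 ^ 0) = M" using Mprop unfolding MI_def by auto
    then show ?case using ext by (intro exI[of _ 0]) simp
  next
    case (Suc n)
    then obtain lo where lo: "f extreme_point_of closure (convex hull (MI lo (lo + L / 2 ^ n)))" by blast
    define d where "d = L / 2 ^ Suc n"
    have dd: "L / 2 ^ n = d + d" unfolding d_def by (simp add: field_simps)
    have "MI lo (lo + L / 2 ^ n) = MI lo (lo + d) \<union> MI (lo + d) (lo + d + d)"
      unfolding dd MI_def by auto
    moreover have "MI lo (lo + d) \<subseteq> Q" "MI (lo + d) (lo + d + d) \<subseteq> Q" using Q(3) unfolding MI_def by auto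
    ultimately have "f extreme_point_of closure (convex hull (MI lo (lo + d))) \<or>
        f extreme_point_of closure (convex hull (MI (lo + d) (lo + d + d)))"
      using two_pieces[OF Q(1) Q(2)] lo by simp
    then show ?case
    proof
      assume "f extreme_point_of closure (convex hull (MI lo (lo + d)))"
      then show ?case by (intro exI[of _ lo]) (simp add: d_def)
    next
      assume "f extreme_point_of closure (convex hull (MI (lo + d) (lo + d + d)))"
      then show ?case by (intro exI[of _ "lo + d"]) (simp add: d_def add.assoc)
    qed
  qed
  then have "\<forall>n. f p2 - (f p1)\<^sup>2 \<le> (L / 2 ^ n)\<^sup>2"
  proof (intro allI)
    fix n
    obtain lo where "f extreme_point_of closure (convex hull (MI lo (lo + L / 2 ^ n)))"
      using ind[of n] by blast
    then have "f \<in> closure (convex hull (MI lo (lo + L / 2 ^ n)))" unfolding extreme_point_of_def by blast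
    from bound[OF this] show "f p2 - (f p1)\<^sup>2 \<le> (L / 2 ^ n)\<^sup>2" by simp
  qed
  then show ?thesis using small_pow[of "f p2 - (f p1)\<^sup>2" L] by force
qed


theorem lemma10:
  fixes b :: "'x::countable \<Rightarrow> 'x \<Rightarrow> real" and c :: "'x \<Rightarrow> real"
    and G :: "('g, 'm) monoid_scheme" and \<phi> :: "'g \<Rightarrow> 'x \<Rightarrow> 'x" and x0 :: 'x
    and K M :: "('x \<Rightarrow> real) set"
  assumes "graph_bc b c" and "locally_finite_graph b" and "connected_graph b"
    and "group G" and "group_action G UNIV \<phi>" and "cocompact G \<phi>"
    and "G_invariant G \<phi> b c"
    and K_def: "K = closure {f \<in> Hplus b c. f x0 = 1}"
    and M_def: "M = {f \<in> K. multiplicative G \<phi> f}"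
  shows "M = {f. f extreme_point_of (closure (convex hull M))}"
proof -
  note gb = assms(1) and lf = assms(2) and conn = assms(3) and grp = assms(4)
    and ga = assms(5) and cc = assms(6)
  have KK: "K = Kp b c x0" using K_def K_eq[OF gb lf] by simp
  have "\<forall>v. \<exists>B. 0 \<le> B \<and> (\<forall>f\<in>Kp b c x0. f v \<le> B)" using harnack[OF conn lf gb] by blast
  from choice[OF this] obtain Bf where Bf: "\<forall>v. 0 \<le> Bf v \<and> (\<forall>f\<in>Kp b c x0. f v \<le> Bf v)" by blast
  define W where "W = Wset b c G \<phi> x0 Bf"
  have Wcl: "closed W" unfolding W_def by (rule closed_Wset)
  have Wcv: "convex W" unfolding W_def by (rule convex_Wset)
  have Wcp: "compact W"
  proof -
    have "W \<subseteq> {h. \<forall>x. 0 \<le> h x \<and> h x \<le> Bf x}" unfolding W_def Wset_def by blast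
    then have "{h. \<forall>x. 0 \<le> h x \<and> h x \<le> Bf x} \<inter> W = W" by blast
    moreover have "compact ({h. \<forall>x. 0 \<le> h x \<and> h x \<le> Bf x} \<inter> W)"
      by (rule compact_Int_closed[OF box_compact Wcl])
    ultimately show ?thesis by simp
  qed
  have Mchar: "m \<in> Kp b c x0 \<and> (\<forall>g\<in>carrier G. \<forall>x. m (\<phi> g x) = m (\<phi> g x0) * m x)" if m: "m \<in> M" for m
  proof -
    have mK: "m \<in> Kp b c x0" and mm: "multiplicative G \<phi> m" using m by (simp_all add: M_def KK)
    have "m x0 = 1" using mK by (simp add: Kp_def)
    then show ?thesis using mK mult_fwd[OF grp mm] by blast
  qed
  have MW: "M \<subseteq> W"
  proof
    fix m assume m: "m \<in> M"
    have mK: "m \<in> Kp b c x0" and me: "\<forall>g\<in>carrier G. \<forall>x. m (\<phi> g x) = m (\<phi> g x0) * m x"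
      using Mchar[OF m] by blast+
    have mnn: "\<And>x. 0 \<le> m x" and mh: "harm b c m" and m1: "m x0 = 1" using mK by (simp_all add: Kp_def)
    have mB: "\<And>x. m x \<le> Bf x" using Bf mK by blast
    have A: "\<forall>x. 0 \<le> m x \<and> m x \<le> Bf x" using mnn mB by blast
    have B: "\<forall>x. HS b c m x = 0" using mh by (simp add: harm_def)
    have D: "\<forall>g. g \<in> carrier G \<longrightarrow> (\<forall>v l. (m (\<phi> g v) - l * m v)\<^sup>2 \<le> (Bf v)\<^sup>2 * (m (\<phi> g (\<phi> g x0)) - 2 * l * m (\<phi> g x0) + l\<^sup>2))"
    proof (intro allI impI)
      fix g v l assume g: "g \<in> carrier G"
      define a where "a = m (\<phi> g x0)"
      have e1: "m (\<phi> g v) = a * m v" using me g unfolding a_def by blast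
      have e2: "m (\<phi> g (\<phi> g x0)) = a * a" using me g unfolding a_def by blast
      have "(m v)\<^sup>2 \<le> (Bf v)\<^sup>2" using mnn[of v] mB[of v] by (intro power_mono) auto
      have "(m (\<phi> g v) - l * m v)\<^sup>2 = (a - l)\<^sup>2 * (m v)\<^sup>2"
        unfolding e1 by (simp add: power2_eq_square algebra_simps)
      also have "\<dots> \<le> (a - l)\<^sup>2 * (Bf v)\<^sup>2" using \<open>(m v)\<^sup>2 \<le> (Bf v)\<^sup>2\<close> by (intro mult_left_mono) auto
      also have "\<dots> = (Bf v)\<^sup>2 * (m (\<phi> g (\<phi> g x0)) - 2 * l * m (\<phi> g x0) + l\<^sup>2)"
        unfolding e2 a_def[symmetric] by (simp add: power2_eq_square algebra_simps)
      finally show "(m (\<phi> g v) - l * m v)\<^sup>2 \<le> (Bf v)\<^sup>2 * (m (\<phi> g (\<phi> g x0)) - 2 * l * m (\<phi> g x0) + l\<^sup>2)" .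
    qed
    have E: "\<forall>g. g \<in> carrier G \<longrightarrow> (\<forall>l. 0 \<le> m (\<phi> g (\<phi> g x0)) - 2 * l * m (\<phi> g x0) + l\<^sup>2)"
    proof (intro allI impI)
      fix g l assume g: "g \<in> carrier G"
      define a where "a = m (\<phi> g x0)"
      have e2: "m (\<phi> g (\<phi> g x0)) = a * a" using me g unfolding a_def by blast
      have "m (\<phi> g (\<phi> g x0)) - 2 * l * m (\<phi> g x0) + l\<^sup>2 = (a - l)\<^sup>2"
        unfolding e2 a_def[symmetric] by (simp add: power2_eq_square algebra_simps)
      then show "0 \<le> m (\<phi> g (\<phi> g x0)) - 2 * l * m (\<phi> g x0) + l\<^sup>2" by simp
    qed
    show "m \<in> W" unfolding W_def Wset_def using A B m1 D E by blast
  qed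
  define C where "C = closure (convex hull M)"
  have CW: "C \<subseteq> W" unfolding C_def
    by (intro closure_minimal Wcl hull_minimal[where S=convex] MW Wcv)
  have WE: "0 \<le> h (\<phi> g (\<phi> g x0)) - (h (\<phi> g x0))\<^sup>2" if "h \<in> W" "g \<in> carrier G" for h g
  proof -
    have "0 \<le> h (\<phi> g (\<phi> g x0)) - 2 * (h (\<phi> g x0)) * h (\<phi> g x0) + (h (\<phi> g x0))\<^sup>2"
      using that unfolding W_def Wset_def by blast
    then show ?thesis by (simp add: power2_eq_square)
  qed
  have WJ0: "h (\<phi> g v) = h (\<phi> g x0) * h v"
    if "h \<in> W" "g \<in> carrier G" "h (\<phi> g (\<phi> g x0)) = (h (\<phi> g x0))\<^sup>2" for h g v
  proof -
    have "(h (\<phi> g v) - h (\<phi> g x0) * h v)\<^sup>2 \<le> (Bf v)\<^sup>2 * (h (\<phi> g (\<phi> g x0)) - 2 * h (\<phi> g x0) * h (\<phi> g x0) + (h (\<phi> g x0))\<^sup>2)"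
      using that(1,2) unfolding W_def Wset_def by blast
    also have "\<dots> = 0" using that(3) by (simp add: power2_eq_square)
    finally have "(h (\<phi> g v) - h (\<phi> g x0) * h v)\<^sup>2 = 0" by (meson order.antisym zero_le_power2)
    then show ?thesis by simp
  qed
  show ?thesis
  proof (rule equalityI; rule subsetI)
    fix f assume fM: "f \<in> M"
    have fK: "f \<in> Kp b c x0" and fe: "\<forall>g\<in>carrier G. \<forall>x. f (\<phi> g x) = f (\<phi> g x0) * f x"
      using Mchar[OF fM] by blast+
    have fC: "f \<in> C" unfolding C_def by (rule subsetD[OF closure_subset, OF subsetD[OF hull_subset fM]])
    have gp: "\<forall>g\<in>carrier G. 0 \<le> f (\<phi> g x0)" using fK by (simp add: Kp_def)
    have "f extreme_point_of C" unfolding extreme_point_of_def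
    proof (intro conjI ballI fC)
      fix a1 a2 assume a1: "a1 \<in> C" and a2: "a2 \<in> C"
      show "f \<notin> open_segment a1 a2"
      proof
        assume "f \<in> open_segment a1 a2"
        then obtain t where t: "a1 \<noteq> a2" "0 < t" "t < 1" "f = (1 - t) *\<^sub>R a1 + t *\<^sub>R a2"
          by (auto simp: in_segment)
        have fx: "\<And>x. f x = (1 - t) * a1 x + t * a2 x" using t(4) by simp
        have a1W: "a1 \<in> W" using subsetD[OF CW a1] .
        have a2W: "a2 \<in> W" using subsetD[OF CW a2] .
        have key: "a1 (\<phi> g x) = f (\<phi> g x0) * a1 x \<and> a2 (\<phi> g x) = f (\<phi> g x0) * a2 x"
          if g: "g \<in> carrier G" for g x
        proof -
          define p1 where "p1 = \<phi> g x0"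
          define p2 where "p2 = \<phi> g p1"
          have fq: "f p2 = (f p1)\<^sup>2" using fe[rule_format, OF g, of p1] unfolding p2_def p1_def by (simp add: power2_eq_square)
          have j1: "0 \<le> a1 p2 - (a1 p1)\<^sup>2" using WE[OF a1W g] unfolding p2_def p1_def .
          have j2: "0 \<le> a2 p2 - (a2 p1)\<^sup>2" using WE[OF a2W g] unfolding p2_def p1_def .
          have "(1 - t) * a1 p2 + t * a2 p2 = ((1 - t) * a1 p1 + t * a2 p1)\<^sup>2"
            using fq fx[of p1] fx[of p2] by simp
          then have J: "a1 p1 = a2 p1 \<and> a1 p2 = (a1 p1)\<^sup>2 \<and> a2 p2 = (a2 p1)\<^sup>2"
            using jensen_eq[OF t(2) t(3) j1 j2] by blast
          have fp1: "f p1 = a1 p1" using fx[of p1] J by (simp add: algebra_simps)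
          have "a1 (\<phi> g x) = a1 p1 * a1 x" using WJ0[OF a1W g] J unfolding p2_def p1_def by blast
          moreover have "a2 (\<phi> g x) = a2 p1 * a2 x" using WJ0[OF a2W g] J unfolding p2_def p1_def by blast
          ultimately show ?thesis using fp1 J unfolding p1_def by simp
        qed
        have "a1 = f" using uniq[OF conn lf cc fK Wset_Kp[OF a1W[unfolded W_def]] fe _ gp] key by blast
        moreover have "a2 = f" using uniq[OF conn lf cc fK Wset_Kp[OF a2W[unfolded W_def]] fe _ gp] key by blast
        ultimately show False using t(1) by simp
      qed
    qed
    then show "f \<in> {f. f extreme_point_of closure (convex hull M)}" by (simp add: C_def)
  next
    fix f assume "f \<in> {f. f extreme_point_of closure (convex hull M)}"
    then have ext: "f extreme_point_of closure (convex hull M)" by simp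
    then have "f \<in> C" unfolding C_def extreme_point_of_def by blast
    then have fW: "f \<in> W" using subsetD[OF CW] by simp
    have fK: "f \<in> Kp b c x0" using Wset_Kp[OF fW[unfolded W_def]] .
    have fe: "\<forall>g\<in>carrier G. \<forall>x. f (\<phi> g x) = f (\<phi> g x0) * f x"
    proof (intro ballI allI)
      fix g x assume g: "g \<in> carrier G"
      define p1 where "p1 = \<phi> g x0"
      define p2 where "p2 = \<phi> g p1"
      have Mprop: "\<forall>m\<in>M. m p2 = (m p1)\<^sup>2 \<and> 0 \<le> m p1 \<and> m p1 \<le> Bf p1"
      proof
        fix m assume m: "m \<in> M"
        have mK: "m \<in> Kp b c x0" and me: "\<forall>g\<in>carrier G. \<forall>x. m (\<phi> g x) = m (\<phi> g x0) * m x"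
          using Mchar[OF m] by blast+
        have "m p2 = (m p1)\<^sup>2" using me[rule_format, OF g, of p1] unfolding p2_def p1_def by (simp add: power2_eq_square)
        moreover have "0 \<le> m p1" using mK by (simp add: Kp_def)
        moreover have "m p1 \<le> Bf p1" using Bf mK by blast
        ultimately show "m p2 = (m p1)\<^sup>2 \<and> 0 \<le> m p1 \<and> m p1 \<le> Bf p1" by blast
      qed
      have "f p2 \<le> (f p1)\<^sup>2" by (rule bisect[OF Wcp Wcv MW Mprop ext])
      moreover have "0 \<le> f p2 - (f p1)\<^sup>2" using WE[OF fW g] unfolding p2_def p1_def .
      ultimately have "f p2 = (f p1)\<^sup>2" by simp
      then show "f (\<phi> g x) = f (\<phi> g x0) * f x" using WJ0[OF fW g] unfolding p2_def p1_def by blast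
    qed
    have "multiplicative G \<phi> f" using mult_bwd[OF grp ga Kp_pos[OF fK conn lf] fe] .
    then show "f \<in> M" using fK by (simp add: M_def KK)
  qed
qed

end
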